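(* Let $k$ be a difference field of characteristic $0$ and $R=k\{y_1,\ldots,y_n\}$. Every radical well-mixed monomial $\sigma$-ideal $I$ of $R$ is generated by finitely many monomials as a radical well-mixed $\sigma$-ideal, i.e. $I=\langle F\rangle_r$ for some finite set $F$ of monomials.
   Context: A difference field is a field $k$ with a ring endomorphism $\sigma$; $R=k\{y_1,\ldots,y_n\}$ is the polynomial ring over $k$ in the variables $\sigma^j(y_i)$, with $\sigma$ extended naturally. For $p=\sum_ic_ix^i\in\mathbb{N}[x]$ and $a\in R$, $a^p=\prod_i(\sigma^i(a))^{c_i}$; monomials are $\mathbf{y}^{\mathbf{u}}=y_1^{u_1}\cdots y_n^{u_n}$ with $\mathbf{u}\in\mathbb{N}[x]^n$. A $\sigma$-ideal is an ideal stable under $\sigma$; monomial if generated by monomials; well-mixed if $ab\in I\Rightarrow a\sigma(b)\in I$. $\langle F\rangle_r$ is the smallest radical well-mixed $\sigma$-ideal containing $F$. *)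

theory Defs
  imports Main "HOL-Library.Poly_Mapping"
begin

text \<open>Variables of the difference polynomial ring k{y_v : v in 'v}: the pair (v, j) stands
 for sigma^j(y_v).\<close>

type_synonym 'v dmon = "('v \<times> nat) \<Rightarrow>\<^sub>0 nat"
type_synonym ('v, 'a) dpoly = "'v dmon \<Rightarrow>\<^sub>0 'a"

definition difference_field :: "('a::field \<Rightarrow> 'a) \<Rightarrow> bool" where
  "difference_field \<sigma> \<longleftrightarrow> (\<forall>a b. \<sigma> (a + b) = \<sigma> a + \<sigma> b) \<and> (\<forall>a b. \<sigma> (a * b) = \<sigma> a * \<sigma> b)
      \<and> \<sigma> 1 = 1"

definition shift_mon :: "'v dmon \<Rightarrow> 'v dmon" where
  "shift_mon m = (\<Sum>x\<in>Poly_Mapping.keys m. Poly_Mapping.single (fst x, Suc (snd x)) (Poly_Mapping.lookup m x))"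

definition sigma_ext :: "('a::field \<Rightarrow> 'a) \<Rightarrow> ('v, 'a) dpoly \<Rightarrow> ('v, 'a) dpoly" where
  "sigma_ext \<sigma> p = (\<Sum>m\<in>Poly_Mapping.keys p. Poly_Mapping.single (shift_mon m) (\<sigma> (Poly_Mapping.lookup p m)))"

definition is_ideal :: "'r::comm_ring_1 set \<Rightarrow> bool" where
  "is_ideal I \<longleftrightarrow> 0 \<in> I \<and> (\<forall>a\<in>I. \<forall>b\<in>I. a + b \<in> I) \<and> (\<forall>a\<in>I. \<forall>r. r * a \<in> I)"

definition ideal_gen :: "'r::comm_ring_1 set \<Rightarrow> 'r set" where
  "ideal_gen S = \<Inter>{J. is_ideal J \<and> S \<subseteq> J}"

definition is_radical :: "'r::comm_ring_1 set \<Rightarrow> bool" where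
  "is_radical I \<longleftrightarrow> (\<forall>a (n::nat). a ^ n \<in> I \<longrightarrow> a \<in> I)"

definition is_sigma_ideal :: "('a::field \<Rightarrow> 'a) \<Rightarrow> ('v, 'a) dpoly set \<Rightarrow> bool" where
  "is_sigma_ideal \<sigma> I \<longleftrightarrow> is_ideal I \<and> (\<forall>a\<in>I. sigma_ext \<sigma> a \<in> I)"

definition is_well_mixed :: "('a::field \<Rightarrow> 'a) \<Rightarrow> ('v, 'a) dpoly set \<Rightarrow> bool" where
  "is_well_mixed \<sigma> I \<longleftrightarrow> (\<forall>a b. a * b \<in> I \<longrightarrow> a * sigma_ext \<sigma> b \<in> I)"

definition is_rwm_sigma_ideal :: "('a::field \<Rightarrow> 'a) \<Rightarrow> ('v, 'a) dpoly set \<Rightarrow> bool" where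
  "is_rwm_sigma_ideal \<sigma> I \<longleftrightarrow> is_sigma_ideal \<sigma> I \<and> is_radical I \<and> is_well_mixed \<sigma> I"

definition dmonomials :: "('v, 'a::field) dpoly set" where
  "dmonomials = {Poly_Mapping.single m 1 | m. True}"

definition is_monomial_ideal :: "('v, 'a::field) dpoly set \<Rightarrow> bool" where
  "is_monomial_ideal I \<longleftrightarrow> (\<exists>S \<subseteq> dmonomials. I = ideal_gen S)"

definition rwm_gen :: "('a::field \<Rightarrow> 'a) \<Rightarrow> ('v, 'a) dpoly set \<Rightarrow> ('v, 'a) dpoly set" where
  "rwm_gen \<sigma> F = \<Inter>{J. is_rwm_sigma_ideal \<sigma> J \<and> F \<subseteq> J}"

end

theory Submission imports Defs begin

lemma lookup_minus_nat: "Poly_Mapping.lookup (f - g) k = Poly_Mapping.lookup f k - Poly_Mapping.lookup (g :: 'b \<Rightarrow>\<^sub>0 nat) k"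
  by (rule lookup_minus)

lemma rep_sum: "(\<Sum>x\<in>Poly_Mapping.keys m. Poly_Mapping.single x (Poly_Mapping.lookup m x)) = (m :: 'b \<Rightarrow>\<^sub>0 nat)"
proof (rule poly_mapping_eqI)
  fix y
  show "Poly_Mapping.lookup (\<Sum>x\<in>Poly_Mapping.keys m. Poly_Mapping.single x (Poly_Mapping.lookup m x)) y = Poly_Mapping.lookup m y"
    by (simp add: lookup_sum lookup_single when_def in_keys_iff)
qed

lemma sigma_mon: "\<sigma> 1 = 1 \<Longrightarrow> sigma_ext \<sigma> (Poly_Mapping.single m (1::'a::field)) = Poly_Mapping.single (shift_mon m) 1"
  unfolding sigma_ext_def by simp

lemma shift_single: "shift_mon (Poly_Mapping.single (v,j) e) = Poly_Mapping.single (v, Suc j) e"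
  unfolding shift_mon_def by (cases "e=0") simp_all

lemma shift1:
  fixes J :: "('v, 'a::field) dpoly set"
  assumes wm: "is_well_mixed \<sigma> J" and s1: "\<sigma> 1 = 1"
    and m: "Poly_Mapping.single (n + Poly_Mapping.single (v,j) e) 1 \<in> J"
  shows "Poly_Mapping.single (n + Poly_Mapping.single (v, Suc j) e) 1 \<in> J"
proof -
  have "Poly_Mapping.single n (1::'a) * Poly_Mapping.single (Poly_Mapping.single (v,j) e) 1 \<in> J"
    using m by (simp add: mult_single)
  then have "Poly_Mapping.single n (1::'a) * sigma_ext \<sigma> (Poly_Mapping.single (Poly_Mapping.single (v,j) e) 1) \<in> J"
    using wm unfolding is_well_mixed_def by blast
  then show ?thesis by (simp add: s1 sigma_mon shift_single mult_single)
qed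

lemma shiftd:
  fixes J :: "('v, 'a::field) dpoly set"
  assumes wm: "is_well_mixed \<sigma> J" and s1: "\<sigma> 1 = 1"
    and m: "Poly_Mapping.single (n + Poly_Mapping.single (v,j) e) 1 \<in> J" and le: "j \<le> j'"
  shows "Poly_Mapping.single (n + Poly_Mapping.single (v, j') e) 1 \<in> J"
proof -
  have "Poly_Mapping.single (n + Poly_Mapping.single (v, j + d) e) (1::'a) \<in> J" for d
    by (induction d) (use m shift1[OF wm s1] in auto)
  from this[of "j' - j"] show ?thesis using le by simp
qed

lemma push:
  fixes J :: "('v, 'a::field) dpoly set"
  assumes wm: "is_well_mixed \<sigma> J" and s1: "\<sigma> 1 = 1" and fin: "finite K"
  shows "(\<forall>x\<in>K. \<exists>y\<in>Poly_Mapping.keys m'. fst y = fst x \<and> snd x \<le> snd y) \<Longrightarrow>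
     Poly_Mapping.single (n + (\<Sum>x\<in>K. Poly_Mapping.single x (h x))) (1::'a) \<in> J \<Longrightarrow>
     \<exists>p. Poly_Mapping.keys p \<subseteq> Poly_Mapping.keys m' \<and> Poly_Mapping.single (n + p) 1 \<in> J"
  using fin
proof (induction K arbitrary: n rule: finite_induct)
  case empty
  then show ?case by (intro exI[of _ 0]) simp
next
  case (insert x K)
  have "Poly_Mapping.single ((n + Poly_Mapping.single x (h x)) + (\<Sum>x\<in>K. Poly_Mapping.single x (h x))) (1::'a) \<in> J"
    using insert by (simp add: add.assoc)
  then obtain p where p: "Poly_Mapping.keys p \<subseteq> Poly_Mapping.keys m'"
    and pJ: "Poly_Mapping.single ((n + Poly_Mapping.single x (h x)) + p) (1::'a) \<in> J"
    using insert by blast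
  obtain y where y: "y \<in> Poly_Mapping.keys m'" "fst y = fst x" "snd x \<le> snd y" using insert by blast
  obtain v j where x: "x = (v,j)" by fastforce
  have y2: "y = (v, snd y)" using y x by (cases y) auto
  have "Poly_Mapping.single ((n + p) + Poly_Mapping.single (v,j) (h x)) (1::'a) \<in> J"
    using pJ x by (simp add: ac_simps)
  from shiftd[OF wm s1 this, of "snd y"] y x
  have "Poly_Mapping.single ((n + p) + Poly_Mapping.single y (h x)) (1::'a) \<in> J"
    using y2 by simp
  moreover have "Poly_Mapping.keys (p + Poly_Mapping.single y (h x)) \<subseteq> Poly_Mapping.keys m'"
    proof -
    have "Poly_Mapping.keys (Poly_Mapping.single y (h x)) \<subseteq> {y}" by simp
    then show ?thesis using keys_add[of p "Poly_Mapping.single y (h x)"] p y by blast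
  qed
  ultimately show ?case by (intro exI[of _ "p + Poly_Mapping.single y (h x)"]) (simp add: add.assoc)
qed

lemma mon_power: "(Poly_Mapping.single a (1::'a::field)) ^ N = Poly_Mapping.single (\<Sum>i<N. a) 1"
  by (induction N) (simp_all add: mult_single add.commute)

lemma dom_lem:
  fixes J :: "('v, 'a::field) dpoly set"
  assumes id: "is_ideal J" and rad: "is_radical J" and wm: "is_well_mixed \<sigma> J" and s1: "\<sigma> 1 = 1"
    and mJ: "Poly_Mapping.single m (1::'a) \<in> J"
    and d: "\<forall>x\<in>Poly_Mapping.keys m. \<exists>y\<in>Poly_Mapping.keys m'. fst y = fst x \<and> snd x \<le> snd y"
  shows "Poly_Mapping.single m' (1::'a) \<in> J"
proof -
  have "Poly_Mapping.single (0 + (\<Sum>x\<in>Poly_Mapping.keys m. Poly_Mapping.single x (Poly_Mapping.lookup m x))) (1::'a) \<in> J"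
    using mJ by (simp add: rep_sum)
  from push[OF wm s1 _ d this] obtain p where p: "Poly_Mapping.keys p \<subseteq> Poly_Mapping.keys m'"
    and pJ: "Poly_Mapping.single p (1::'a) \<in> J" by auto
  define N where "N = (\<Sum>x\<in>Poly_Mapping.keys p. Poly_Mapping.lookup p x)"
  define q where "q = (\<Sum>i<N. m')"
  have le: "Poly_Mapping.lookup p x \<le> Poly_Mapping.lookup q x" for x
  proof (cases "x \<in> Poly_Mapping.keys p")
    case True
    have a: "Poly_Mapping.lookup p x \<le> N" unfolding N_def by (rule member_le_sum) (use True in auto)
    have "x \<in> Poly_Mapping.keys m'" using True p by blast
    then have b: "Poly_Mapping.lookup m' x \<ge> 1" by (simp add: in_keys_iff)
    have c: "Poly_Mapping.lookup q x = N * Poly_Mapping.lookup m' x" unfolding q_def by (simp add: lookup_sum)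
    have "N * 1 \<le> N * Poly_Mapping.lookup m' x" using b by (rule mult_le_mono2)
    then show ?thesis using a c by linarith
  next
    case False
    then show ?thesis by (simp add: in_keys_iff)
  qed
  have "q = p + (q - p)"
    by (rule poly_mapping_eqI) (use le in \<open>simp add: lookup_add lookup_minus\<close>)
  then have "Poly_Mapping.single q (1::'a) = Poly_Mapping.single (q - p) 1 * Poly_Mapping.single p 1"
    by (metis mult_single mult_1 add.commute)
  then have "Poly_Mapping.single q (1::'a) \<in> J" using id pJ unfolding is_ideal_def by metis
  then have "Poly_Mapping.single m' (1::'a) ^ N \<in> J" unfolding q_def by (simp add: mon_power)
  then show ?thesis using rad unfolding is_radical_def by blast
qed


definition can :: "'v set \<Rightarrow> ('v \<Rightarrow> nat) \<Rightarrow> 'v dmon" where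
  "can D c = (\<Sum>v\<in>D. Poly_Mapping.single (v, c v) 1)"

lemma lookup_can:
  assumes "finite D"
  shows "Poly_Mapping.lookup (can D c) (w,j) = (if w \<in> D \<and> j = c w then 1 else 0)"
proof -
  have "Poly_Mapping.lookup (can D c) (w,j) = (\<Sum>v\<in>D. (1::nat) when (v, c v) = (w,j))"
    unfolding can_def by (simp only: lookup_sum lookup_single)
  also have "\<dots> = (\<Sum>v\<in>D. if v = w then (if j = c w then 1 else 0) else 0)"
    by (rule sum.cong) (auto simp: when_def)
  also have "\<dots> = (if w \<in> D \<and> j = c w then 1 else 0)" using assms by (simp add: sum.delta)
  finally show ?thesis .
qed

lemma keys_can:
  assumes "finite D"
  shows "(w,j) \<in> Poly_Mapping.keys (can D c) \<longleftrightarrow> w \<in> D \<and> j = c w"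
  using lookup_can[OF assms, of c w j] by (simp add: in_keys_iff)

lemma dickson:
  "finite D \<Longrightarrow> \<exists>F\<subseteq>X. finite F \<and> (\<forall>x\<in>X. \<exists>f\<in>F. \<forall>v\<in>D. f v \<le> (x v::nat))"
proof (induction "card D" arbitrary: D X rule: less_induct)
  case less
  show ?case
  proof (cases "X = {}")
    case True then show ?thesis by auto
  next
    case False
    then obtain x0 where x0: "x0 \<in> X" by blast
    have ex: "\<forall>v k. \<exists>G. v \<in> D \<longrightarrow> (G \<subseteq> {x\<in>X. x v = k} \<and> finite G \<and>
             (\<forall>x\<in>{x\<in>X. x v = k}. \<exists>f\<in>G. \<forall>w\<in>D-{v}. f w \<le> x w))"
    proof (intro allI)
      fix v k
      show "\<exists>G. v \<in> D \<longrightarrow> (G \<subseteq> {x\<in>X. x v = k} \<and> finite G \<and>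
             (\<forall>x\<in>{x\<in>X. x v = k}. \<exists>f\<in>G. \<forall>w\<in>D-{v}. f w \<le> x w))"
      proof (cases "v \<in> D")
        case True
        have "card (D - {v}) < card D" using True less(2) by (intro card_Diff1_less)
        from less(1)[OF this, of "{x\<in>X. x v = k}"] less(2) show ?thesis by auto
      qed auto
    qed
    define G where "G v k = (SOME G. v \<in> D \<longrightarrow> (G \<subseteq> {x\<in>X. x v = k} \<and> finite G \<and>
             (\<forall>x\<in>{x\<in>X. x v = k}. \<exists>f\<in>G. \<forall>w\<in>D-{v}. f w \<le> x w)))" for v k
    have G: "\<And>v k. v \<in> D \<Longrightarrow> G v k \<subseteq> {x\<in>X. x v = k} \<and> finite (G v k) \<and>
             (\<forall>x\<in>{x\<in>X. x v = k}. \<exists>f\<in>G v k. \<forall>w\<in>D-{v}. f w \<le> x w)"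
    proof -
      fix v k assume vD: "v \<in> D"
      from someI_ex[OF ex[rule_format, of v k]] vD
      show "G v k \<subseteq> {x\<in>X. x v = k} \<and> finite (G v k) \<and>
             (\<forall>x\<in>{x\<in>X. x v = k}. \<exists>f\<in>G v k. \<forall>w\<in>D-{v}. f w \<le> x w)"
        unfolding G_def by blast
    qed
    define F where "F = insert x0 (\<Union>v\<in>D. \<Union>k\<in>{..<x0 v}. G v k)"
    have "F \<subseteq> X" unfolding F_def using x0 G by blast
    moreover have "finite F" unfolding F_def using less(2) G by auto
    moreover have "\<exists>f\<in>F. \<forall>v\<in>D. f v \<le> x v" if x: "x \<in> X" for x
    proof (cases "\<forall>v\<in>D. x0 v \<le> x v")
      case True then show ?thesis unfolding F_def by auto
    next
      case False
      then obtain v where v: "v \<in> D" "x v < x0 v" by auto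
      then obtain f where f: "f \<in> G v (x v)" "\<forall>w\<in>D-{v}. f w \<le> x w" using G[of v "x v"] x by blast
      have "f v = x v" using f G[OF v(1), of "x v"] by blast
      then have "\<forall>w\<in>D. f w \<le> x w" using f by (metis DiffI order_refl singletonD)
      moreover have "f \<in> F" unfolding F_def using v f by blast
      ultimately show ?thesis by blast
    qed
    ultimately show ?thesis by blast
  qed
qed

theorem corollary5p6:
  fixes \<sigma> :: "'a::field_char_0 \<Rightarrow> 'a"
    and I :: "('v::finite, 'a) dpoly set"
  assumes "difference_field \<sigma>"
    and "is_rwm_sigma_ideal \<sigma> I"
    and "is_monomial_ideal I"
  shows "\<exists>F. finite F \<and> F \<subseteq> dmonomials \<and> I = rwm_gen \<sigma> F"
proof -
  obtain S where S: "S \<subseteq> dmonomials" "I = ideal_gen S"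
    using assms(3) unfolding is_monomial_ideal_def by blast
  have s1: "\<sigma> 1 = 1" using assms(1) unfolding difference_field_def by blast
  have idI: "is_ideal I" and radI: "is_radical I" and wmI: "is_well_mixed \<sigma> I"
    using assms(2) unfolding is_rwm_sigma_ideal_def is_sigma_ideal_def by auto
  define X where "X D = {c. Poly_Mapping.single (can D c) (1::'a) \<in> I}" for D
  have "\<forall>D. \<exists>G. G \<subseteq> X D \<and> finite G \<and> (\<forall>x\<in>X D. \<exists>f\<in>G. \<forall>v\<in>D. f v \<le> x v)"
  proof
    fix D :: "'v set"
    show "\<exists>G. G \<subseteq> X D \<and> finite G \<and> (\<forall>x\<in>X D. \<exists>f\<in>G. \<forall>v\<in>D. f v \<le> x v)"
      using dickson[of D "X D"] by auto
  qed
  then obtain G where G: "\<And>D. G D \<subseteq> X D \<and> finite (G D) \<and> (\<forall>x\<in>X D. \<exists>f\<in>G D. \<forall>v\<in>D. f v \<le> x v)"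
    by metis
  define F where "F = (\<Union>D. (\<lambda>c. Poly_Mapping.single (can D c) (1::'a)) ` G D)"
  have finF: "finite F" unfolding F_def using G by auto
  have FM: "F \<subseteq> dmonomials" unfolding F_def dmonomials_def by blast
  have FI: "F \<subseteq> I" unfolding F_def using G X_def by blast
  have SI: "S \<subseteq> I" unfolding S(2) ideal_gen_def by blast
  have "I \<subseteq> rwm_gen \<sigma> F"
    unfolding rwm_gen_def
  proof (rule Inter_greatest)
    fix J assume "J \<in> {J. is_rwm_sigma_ideal \<sigma> J \<and> F \<subseteq> J}"
    then have J: "is_rwm_sigma_ideal \<sigma> J" "F \<subseteq> J" by auto
    have idJ: "is_ideal J" and radJ: "is_radical J" and wmJ: "is_well_mixed \<sigma> J"
      using J(1) unfolding is_rwm_sigma_ideal_def is_sigma_ideal_def by auto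
    have "S \<subseteq> J"
    proof
      fix s assume sS: "s \<in> S"
      then obtain m where m: "s = Poly_Mapping.single m 1" using S(1) unfolding dmonomials_def by blast
      have mI: "Poly_Mapping.single m (1::'a) \<in> I" using sS m SI by blast
      define D where "D = fst ` Poly_Mapping.keys m"
      define c where "c v = Max {j. (v,j) \<in> Poly_Mapping.keys m}" for v
      have finj: "finite {j. (v,j) \<in> Poly_Mapping.keys m}" for v
      proof -
        have "{j. (v,j) \<in> Poly_Mapping.keys m} \<subseteq> snd ` Poly_Mapping.keys m" by force
        then show ?thesis by (rule finite_subset) simp
      qed
      have finD: "finite D" by simp
      have "\<forall>x\<in>Poly_Mapping.keys m. \<exists>y\<in>Poly_Mapping.keys (can D c). fst y = fst x \<and> snd x \<le> snd y"
      proof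
        fix x assume x: "x \<in> Poly_Mapping.keys m"
        obtain v j where xv: "x = (v,j)" by fastforce
        have "(v, c v) \<in> Poly_Mapping.keys (can D c)"
          using keys_can[OF finD] x xv unfolding D_def by force
        moreover have "j \<le> c v" unfolding c_def using x xv finj by (auto intro: Max_ge)
        ultimately show "\<exists>y\<in>Poly_Mapping.keys (can D c). fst y = fst x \<and> snd x \<le> snd y"
          using xv by force
      qed
      from dom_lem[OF idI radI wmI s1 mI this] have "c \<in> X D" unfolding X_def by simp
      then obtain f where f: "f \<in> G D" "\<forall>v\<in>D. f v \<le> c v" using G[of D] by blast
      have fJ: "Poly_Mapping.single (can D f) (1::'a) \<in> J" using f(1) J(2) unfolding F_def by blast
      have "\<forall>x\<in>Poly_Mapping.keys (can D f). \<exists>y\<in>Poly_Mapping.keys m. fst y = fst x \<and> snd x \<le> snd y"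
      proof
        fix x assume x: "x \<in> Poly_Mapping.keys (can D f)"
        obtain v j where xv: "x = (v,j)" by fastforce
        have vD: "v \<in> D" and jv: "j = f v" using keys_can[OF finD] x xv by auto
        have ne: "{j. (v,j) \<in> Poly_Mapping.keys m} \<noteq> {}" using vD unfolding D_def by force
        have "(v, c v) \<in> Poly_Mapping.keys m" unfolding c_def using Max_in[OF finj ne] by simp
        then show "\<exists>y\<in>Poly_Mapping.keys m. fst y = fst x \<and> snd x \<le> snd y"
          using xv jv f(2) vD by force
      qed
      from dom_lem[OF idJ radJ wmJ s1 fJ this] show "s \<in> J" using m by simp
    qed
    then show "I \<subseteq> J" unfolding S(2) ideal_gen_def using idJ by blast
  qed
  moreover have "rwm_gen \<sigma> F \<subseteq> I"
    unfolding rwm_gen_def using assms(2) FI by blast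
  ultimately show ?thesis using finF FM by blast
qed

end
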